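(* For each integer $k\ge4$, the function $\Phi_k$ has a unique zero in the interval $(\pi/k,\pi/(k-1))$.
   Context: For $\eta\in(0,\pi/3)$ let $|a|=\frac{1}{2\cos\eta}$ and, for an integer $k\ge1$, $\Phi_k(\eta)=(1-|a|^4)\sin((k-1)\eta)-|a|^3\sin((k-2)\eta)+|a|^k\sin\eta$. *)

theory Defs
  imports Complex_Main
begin

definition absa :: "real \<Rightarrow> real" where
  "absa \<eta> = 1 / (2 * cos \<eta>)"

definition Phi :: "nat \<Rightarrow> real \<Rightarrow> real" where
  "Phi k \<eta> = (1 - absa \<eta> ^ 4) * sin ((real k - 1) * \<eta>)
              - absa \<eta> ^ 3 * sin ((real k - 2) * \<eta>)
              + absa \<eta> ^ k * sin \<eta>"

end

theory Submission
  imports Defs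
begin


lemma cos_lb: fixes z :: real assumes "0 \<le> z" shows "cos z \<ge> 1 - z^2/2"
proof -
  have "cos z = 1 - 2 * sin (z/2)^2" using cos_double_sin[of "z/2"] by simp
  moreover have "sin (z/2) \<le> z/2" using sin_x_le_x[of "z/2"] assms by simp
  moreover have "sin (z/2) \<ge> - (z/2)" using sin_x_ge_neg_x[of "z/2"] assms by simp
  moreover have "sin (z/2)^2 \<le> (z/2)^2"
  proof -
    have "\<bar>sin (z/2)\<bar> \<le> \<bar>z/2\<bar>" by (rule abs_sin_x_le_abs_x)
    thus ?thesis by (metis abs_le_square_iff)
  qed
  ultimately show ?thesis by (simp add: power_divide)
qed

lemma sin_diff_lb: fixes x y :: real assumes "0 \<le> y" "y < x" "x \<le> pi/5"
  shows "sin x - sin y \<ge> 2/3 * (x - y)"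
proof -
  obtain z where z: "y < z" "z < x" "sin x - sin y = (x - y) * cos z"
    using MVT2[OF assms(2), of sin cos] by (auto intro: DERIV_sin)
  have "z \<le> 4/5" using z assms pi_less_4 by linarith
  hence "z^2 \<le> (4/5)^2" using z assms by (intro power_mono) auto
  hence "z^2 \<le> 16/25" by (simp add: power2_eq_square)
  hence "cos z \<ge> 2/3" using cos_lb[of z] z assms by linarith
  hence "(x - y) * cos z \<ge> (x - y) * (2/3)" using z by (intro mult_left_mono) auto
  thus ?thesis using z by linarith
qed

lemma cos_diff_ub: fixes x y :: real assumes "y < x"
  shows "cos y - cos x \<le> x - y"
proof -
  obtain z where z: "y < z" "z < x" "cos x - cos y = (x - y) * (- sin z)"
    using MVT2[OF assms(1), of cos "\<lambda>t. - sin t"] by (auto intro: DERIV_cos)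
  have "sin z \<le> 1" by simp
  hence "(x - y) * sin z \<le> x - y" using assms by (simp add: mult_left_le)
  thus ?thesis using z by linarith
qed

lemma pow_diff_ub: fixes x y :: real assumes "0 \<le> y" "y \<le> x" "x \<le> 1"
  shows "x^n - y^n \<le> real n * (x - y)"
proof (induction n)
  case 0 then show ?case by simp
next
  case (Suc n)
  have "x^Suc n - y^Suc n = x * (x^n - y^n) + (x - y) * y^n" by (simp add: algebra_simps)
  also have "\<dots> \<le> 1 * (real n * (x - y)) + (x - y) * 1"
  proof (intro add_mono mult_mono)
    show "x^n - y^n \<ge> 0" using assms by (simp add: power_mono)
    show "y^n \<le> 1" using assms by (simp add: power_le_one)
  qed (use assms Suc in auto)
  finally show ?case by (simp add: algebra_simps)
qed


lemma theta_form:
  fixes k :: nat and e :: real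
  assumes "cos e \<noteq> 0"
  defines "t \<equiv> pi - (real k - 1) * e"
  shows "Phi k e = sin t * (1 - absa e^4 - absa e^2/2) - absa e^3 * sin e * cos t + absa e ^ k * sin e"
proof -
  have s1: "sin ((real k - 1) * e) = sin t"
    unfolding t_def by simp
  have "(real k - 2) * e = pi - (t + e)" unfolding t_def by (simp add: algebra_simps)
  hence s2: "sin ((real k - 2) * e) = sin t * cos e + cos t * sin e"
    by (simp add: sin_add)
  have ac: "absa e * cos e = 1/2" unfolding absa_def using assms by simp
  have "absa e ^ 3 * cos e = absa e ^ 2 / 2"
    using ac by (simp add: power3_eq_cube power2_eq_square)
  then show ?thesis unfolding Phi_def s1 s2
    by (simp add: algebra_simps)
qed


lemma basic:
  fixes e :: real assumes "0 < e" "e \<le> pi/4"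
  shows "0 < cos e" "cos e ^ 2 \<ge> 1/2" "0 < absa e" "absa e ^ 2 \<le> 1/2" "absa e < 1" "0 < sin e"
    "absa e ^ 3 \<le> 1/2"
proof -
  have pe: "e < pi/2" using assms pi_gt_zero by linarith
  show c0: "0 < cos e" using assms pe by (intro cos_gt_zero_pi) auto
  have "cos (pi/4) \<le> cos e" using assms by (intro cos_monotone_0_pi_le) auto
  hence "sqrt 2 / 2 \<le> cos e" by (simp add: cos_45)
  hence "(sqrt 2 / 2)^2 \<le> cos e ^ 2" by (intro power_mono) auto
  thus c2: "cos e ^ 2 \<ge> 1/2" by (simp add: power_divide)
  show "0 < absa e" unfolding absa_def using c0 by simp
  have "absa e ^ 2 = 1 / (4 * cos e ^ 2)" unfolding absa_def by (simp add: power_divide power_mult_distrib)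
  also have "\<dots> \<le> 1/2" using c2 c0 by (simp add: field_simps)
  finally show a2: "absa e ^ 2 \<le> 1/2" .
  show a1: "absa e < 1"
  proof (rule ccontr)
    assume "\<not> absa e < 1"
    hence "1 \<le> absa e ^ 2" by (simp add: one_le_power)
    thus False using a2 by simp
  qed
  show "0 < sin e" using assms pe by (intro sin_gt_zero) auto
  have "absa e ^ 3 \<le> absa e ^ 2" using a1 \<open>0 < absa e\<close> by (intro power_decreasing) auto
  thus "absa e ^ 3 \<le> 1/2" using a2 by linarith
qed

lemma phi4:
  fixes e :: real assumes "cos e \<noteq> 0"
  shows "Phi 4 e = sin e * (4 * cos e ^ 2 - 1) * (16 * cos e ^ 4 - 2) / (16 * cos e ^ 4)"
proof -
  have s3: "sin (3 * e) = sin e * (4 * cos e ^ 2 - 1)"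
  proof -
    have "sin (3*e) = sin (2*e + e)" by simp
    also have "\<dots> = sin e * (4 * cos e ^ 2 - 1)"
      unfolding sin_add sin_double cos_double_cos by (simp add: algebra_simps power2_eq_square)
    finally show ?thesis .
  qed
  have "Phi 4 e = (1 - absa e ^ 4) * sin (3 * e) - absa e ^ 3 * sin (2 * e) + absa e ^ 4 * sin e"
    unfolding Phi_def by (simp add: numeral_eq_Suc)
  also have "\<dots> = sin e * (4 * cos e ^ 2 - 1) * (16 * cos e ^ 4 - 2) / (16 * cos e ^ 4)"
    unfolding s3 sin_double absa_def using assms
    by (simp add: field_simps power_divide) (simp add: algebra_simps power2_eq_square power4_eq_xxxx power3_eq_cube eval_nat_numeral)
  finally show ?thesis .
qed


definition FF :: "nat \<Rightarrow> real \<Rightarrow> real" where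
  "FF k e = sin (pi - (real k - 1)*e) * (1 - absa e^4 - absa e^2/2) / (absa e^3 * sin e)
     - cos (pi - (real k - 1)*e) + absa e ^ (k-3)"

lemma phiF:
  fixes e :: real assumes "0 < e" "e \<le> pi/4" "k \<ge> 3"
  shows "Phi k e = absa e^3 * sin e * FF k e"
proof -
  note b = basic[OF assms(1,2)]
  have ak: "absa e ^ k = absa e ^ 3 * absa e ^ (k-3)"
    using assms(3) by (simp flip: power_add)
  have "absa e^3 * sin e \<noteq> 0" using b by simp
  then show ?thesis
    unfolding theta_form[OF order.strict_implies_not_eq[OF b(1), symmetric]] FF_def ak
    by (simp add: field_simps)
qed

lemma key:
  fixes k :: nat and e1 e2 :: real
  assumes k: "k \<ge> 5" and e: "pi/real k < e1" "e1 < e2" "e2 < pi/(real k - 1)"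
  shows "FF k e2 < FF k e1"
proof -
  define K where "K = real k"
  have K5: "K \<ge> 5" using k unfolding K_def by simp
  have pk: "pi / (K - 1) \<le> pi/4" using K5 by (intro divide_left_mono) auto
  have pk5: "pi / K \<le> pi/5" using K5 by (intro divide_left_mono) auto
  have e1p: "0 < e1" using e K5 unfolding K_def[symmetric] by (smt (verit) divide_pos_pos pi_gt_zero)
  have e2l: "e2 \<le> pi/4" "e1 \<le> pi/4" using e pk unfolding K_def[symmetric] by linarith+
  note b1 = basic[OF e1p e2l(2)] and b2 = basic[OF _ e2l(1)]
  have e2p: "0 < e2" using e1p e by linarith
  note b2 = b2[OF e2p]
  define t1 where "t1 = pi - (K - 1)*e1"
  define t2 where "t2 = pi - (K - 1)*e2"
  have Ke2: "(K-1) * e2 < pi" using e(3) K5 unfolding K_def[symmetric] by (simp add: field_simps)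
  have Ke1: "(K-1) * e1 > pi - pi/K"
  proof -
    have "K*e1 > pi" using e(1) K5 unfolding K_def[symmetric] by (simp add: field_simps)
    hence "(K-1)*(K*e1 - pi) > 0" using K5 by (intro mult_pos_pos) auto
    thus ?thesis using K5 by (simp add: field_simps)
  qed
  have tdiff: "t1 - t2 = (K-1)*(e2 - e1)" unfolding t1_def t2_def by (simp add: algebra_simps)
  have t2p: "0 < t2" unfolding t2_def using Ke2 by simp
  have pos: "(K-1)*(e2 - e1) > 0" using e K5 by (intro mult_pos_pos) auto
  hence t12: "t2 < t1" using tdiff by simp
  have t1u: "t1 < pi/K" unfolding t1_def using Ke1 by simp
  have t1u5: "t1 \<le> pi/5" using t1u pk5 by linarith
  have sind: "sin t1 - sin t2 \<ge> 2/3 * (t1 - t2)" using sin_diff_lb[of t2 t1] t2p t12 t1u5 by simp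
  have cosd: "cos t1 < cos t2" using t2p t12 t1u5 pi_gt_zero by (intro cos_monotone_0_pi) auto
  have st1: "sin t1 \<ge> 0" using t2p t12 t1u5 pi_gt_zero by (intro sin_ge_zero) auto
  define a1 where "a1 = absa e1"
  define a2 where "a2 = absa e2"
  have c21: "cos e2 < cos e1" using e1p e e2l pi_gt_zero by (intro cos_monotone_0_pi) auto
  have a12: "a1 < a2" unfolding a1_def a2_def absa_def using c21 b2(1)
    by (simp add: field_simps)
  have cc: "cos e1 * cos e2 \<ge> 1/2"
  proof -
    have "(1/2)*(1/2) \<le> cos e1^2 * cos e2^2" using b1(2) b2(2) by (intro mult_mono) auto
    hence "(cos e1 * cos e2)^2 \<ge> (1/2)^2" by (simp add: power_mult_distrib power_divide)
    thus ?thesis by (rule power2_le_imp_le) (use b1(1) b2(1) in simp)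
  qed
  have "a2 - a1 = (cos e1 - cos e2) / (2 * (cos e1 * cos e2))"
    unfolding a1_def a2_def absa_def using b1(1) b2(1) by (simp add: field_simps)
  also have "\<dots> \<le> (cos e1 - cos e2) / 1" using cc c21 by (intro divide_left_mono) auto
  also have "\<dots> \<le> e2 - e1" using cos_diff_ub[OF e(2)] by simp
  finally have ad: "a2 - a1 \<le> e2 - e1" .
  have pd: "a2^(k-3) - a1^(k-3) \<le> (K - 3) * (e2 - e1)"
  proof -
    have "a2^(k-3) - a1^(k-3) \<le> real (k-3) * (a2 - a1)"
      using pow_diff_ub[of a1 a2 "k-3"] a12 b1(3) b2(5) unfolding a1_def a2_def by simp
    also have "\<dots> \<le> real (k-3) * (e2 - e1)" using ad by (intro mult_left_mono) auto
    also have "real (k-3) = K - 3" unfolding K_def using k by simp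
    finally show ?thesis .
  qed
  define A1 where "A1 = 1 - a1^4 - a1^2/2"
  define A2 where "A2 = 1 - a2^4 - a2^2/2"
  have "a1^4 \<le> a2^4" "a1^2 \<le> a2^2" using a12 b1(3) unfolding a1_def by (intro power_mono; simp)+
  hence A12: "A2 \<le> A1" unfolding A1_def A2_def by simp
  have a2sq: "a2^4 \<le> 1/4"
  proof -
    have "a2^4 = (a2^2)^2" by simp
    also have "\<dots> \<le> (1/2)^2" using b2(4) unfolding a2_def by (intro power_mono) auto
    finally show ?thesis by (simp add: power2_eq_square)
  qed
  have A2p: "A2 \<ge> 1/2" unfolding A2_def using a2sq b2(4) unfolding a2_def by simp
  define B1 where "B1 = A1 / (a1^3 * sin e1)"
  define B2 where "B2 = A2 / (a2^3 * sin e2)"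
  have den: "a1^3 * sin e1 \<le> a2^3 * sin e2"
  proof (intro mult_mono)
    show "a1^3 \<le> a2^3" using a12 b1(3) unfolding a1_def by (intro power_mono) auto
    show "sin e1 \<le> sin e2" using e e1p e2l pi_gt_zero by (intro sin_monotone_2pi_le) auto
  qed (use b1 b2 a2_def in auto)
  have B12: "B2 \<le> B1" unfolding B1_def B2_def
    using A12 A2p den b1 a1_def by (intro frac_le) auto
  have B2l: "B2 \<ge> (K - 1) / 4"
  proof -
    have "sin e2 \<le> e2" using e2p by (intro sin_x_le_x) auto
    also have "e2 < 4 / (K-1)"
    proof -
      have "pi/(K-1) < 4/(K-1)" using pi_less_4 K5 by (intro divide_strict_right_mono) auto
      thus ?thesis using e(3) unfolding K_def[symmetric] by linarith
    qed
    finally have s2: "sin e2 < 4/(K-1)" .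
    have "a2^3 \<le> A2" using b2(7) A2p a2_def by simp
    hence "1 \<le> A2 / a2^3" using b2(3) a2_def by simp
    have "(K - 1)/4 \<le> 1 / sin e2" using s2 b2(6) K5 by (simp add: field_simps)
    also have "\<dots> \<le> (A2 / a2^3) / sin e2" by (rule divide_right_mono) (use \<open>1 \<le> A2 / a2^3\<close> b2(6) in auto)
    also have "\<dots> = B2" unfolding B2_def by simp
    finally show ?thesis .
  qed
  have main: "sin t1 * B1 - sin t2 * B2 \<ge> (K-1)^2/6 * (e2 - e1)"
  proof -
    have "sin t1 * B1 \<ge> sin t1 * B2" using st1 B12 by (intro mult_left_mono)
    moreover have "(sin t1 - sin t2) * B2 \<ge> (2/3 * ((K-1)*(e2-e1))) * ((K-1)/4)"
    proof (rule mult_mono)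
      show "2/3 * ((K-1)*(e2-e1)) \<le> sin t1 - sin t2" using sind tdiff by simp
      show "(K-1)/4 \<le> B2" by (rule B2l)
      show "0 \<le> (K-1)/4" using K5 by simp
      have "0 < 2/3*(t1-t2)" using t12 by simp
      thus "0 \<le> sin t1 - sin t2" using sind by linarith
    qed
    moreover have "(sin t1 - sin t2) * B2 = sin t1 * B2 - sin t2 * B2" by (simp add: algebra_simps)
    moreover have "(2/3 * ((K-1)*(e2-e1))) * ((K-1)/4) = (K-1)^2/6 * (e2 - e1)"
      by (simp add: power2_eq_square field_simps)
    ultimately show ?thesis by linarith
  qed
  have "(K-4)^2 \<ge> 0" by simp
  hence poly: "(K-1)^2/6 \<ge> K - 3" by (simp add: power2_eq_square algebra_simps)
  have "(K-3)*(e2-e1) \<le> (K-1)^2/6 * (e2-e1)" using poly e by (intro mult_right_mono) auto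
  moreover have "FF k e1 - FF k e2 = (sin t1 * B1 - sin t2 * B2) + (cos t2 - cos t1) - (a2^(k-3) - a1^(k-3))"
    unfolding FF_def t1_def t2_def B1_def B2_def A1_def A2_def a1_def a2_def K_def by simp
  ultimately show ?thesis using main pd cosd by linarith
qed


lemma Abound: fixes e :: real assumes "0 < e" "e \<le> pi/4"
  shows "absa e ^ 3 \<le> 1 - absa e^4 - absa e^2/2"
proof -
  note b = basic[OF assms]
  have "absa e ^ 4 = (absa e ^ 2)^2" by simp
  also have "\<dots> \<le> (1/2)^2" using b(4) by (intro power_mono) auto
  finally have "absa e ^ 4 \<le> 1/4" by (simp add: power2_eq_square)
  thus ?thesis using b(4) b(7) by simp
qed

lemma FF_pos: fixes k :: nat assumes k: "k \<ge> 5" shows "FF k (pi / real k) > 0"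
proof -
  define e where "e = pi / real k"
  have ep: "0 < e" unfolding e_def using k by simp
  have e4: "e \<le> pi/4" unfolding e_def using k by (intro divide_left_mono) auto
  note b = basic[OF ep e4]
  have t: "pi - (real k - 1) * e = e" unfolding e_def using k by (simp add: field_simps)
  have "FF k e = (1 - absa e^4 - absa e^2/2) / absa e^3 - cos e + absa e ^ (k-3)"
    unfolding FF_def t using b by simp
  moreover have "1 \<le> (1 - absa e^4 - absa e^2/2) / absa e^3" using Abound[OF ep e4] b(3) by simp
  moreover have "cos e < 1" using ep e4 cos_monotone_0_pi[of 0 e] pi_gt_zero by simp
  moreover have "absa e ^ (k-3) > 0" using b(3) by simp
  ultimately show ?thesis unfolding e_def by linarith
qed

lemma FF_neg: fixes k :: nat assumes k: "k \<ge> 5" shows "FF k (pi / (real k - 1)) < 0"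
proof -
  define e where "e = pi / (real k - 1)"
  have ep: "0 < e" unfolding e_def using k by simp
  have e4: "e \<le> pi/4" unfolding e_def using k by (intro divide_left_mono) auto
  note b = basic[OF ep e4]
  have t: "pi - (real k - 1) * e = 0" unfolding e_def using k by (simp add: field_simps)
  have "FF k e = - 1 + absa e ^ (k-3)"
    unfolding FF_def t by simp
  moreover have "absa e ^ (k-3) < 1" using b(3) b(5) k by (simp add: power_less_one_iff)
  ultimately show ?thesis unfolding e_def by linarith
qed

lemma ge5:
  fixes k :: nat
  assumes k: "k \<ge> 5"
  shows "\<exists>!\<eta>. \<eta> \<in> {pi / real k <..< pi / (real k - 1)} \<and> Phi k \<eta> = 0"
proof -
  have lpos: "0 < pi / real k" using k by simp
  have lr: "pi / real k < pi / (real k - 1)" using k by (intro divide_strict_left_mono) auto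
  have r4: "pi / (real k - 1) \<le> pi/4" using k by (intro divide_left_mono) auto
  have PF: "Phi k e = absa e^3 * sin e * FF k e" and nz: "absa e^3 * sin e > 0"
    if "pi / real k \<le> e" "e \<le> pi / (real k - 1)" for e
  proof -
    have "0 < e" "e \<le> pi/4" using that lpos r4 by linarith+
    note b = basic[OF this]
    show "Phi k e = absa e^3 * sin e * FF k e" using phiF[OF \<open>0 < e\<close> \<open>e \<le> pi/4\<close>] k by simp
    show "absa e^3 * sin e > 0" using b by simp
  qed
  have ex: "\<exists>x. pi / real k \<le> x \<and> x \<le> pi / (real k - 1) \<and> Phi k x = 0"
  proof (rule IVT2)
    show "Phi k (pi / (real k - 1)) \<le> 0"
      using PF[of "pi / (real k - 1)"] nz[of "pi / (real k - 1)"] FF_neg[OF k] lr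
      by (metis less_eq_real_def mult_pos_neg order_refl)
    show "0 \<le> Phi k (pi / real k)"
      using PF[of "pi / real k"] nz[of "pi / real k"] FF_pos[OF k] lr by simp
    show "pi / real k \<le> pi / (real k - 1)" using lr by simp
    show "\<forall>x. pi / real k \<le> x \<and> x \<le> pi / (real k - 1) \<longrightarrow> isCont (Phi k) x"
    proof (intro allI impI)
      fix x assume x: "pi / real k \<le> x \<and> x \<le> pi / (real k - 1)"
      have "0 < x" "x \<le> pi/4" using x lpos r4 by linarith+
      hence c: "cos x \<noteq> 0" using basic(1)[of x] by simp
      show "isCont (Phi k) x"
        unfolding Phi_def[abs_def] absa_def using c by (intro continuous_intros) auto
    qed
  qed
  then obtain x where x: "pi / real k \<le> x" "x \<le> pi / (real k - 1)" "Phi k x = 0" by blast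
  have xl: "x \<noteq> pi / real k"
    using PF[of "pi / real k"] nz[of "pi / real k"] FF_pos[OF k] lr x by auto
  have xr: "x \<noteq> pi / (real k - 1)"
    using PF[of "pi / (real k - 1)"] nz[of "pi / (real k - 1)"] FF_neg[OF k] lr x by auto
  have FF0: "FF k e = 0" if "e \<in> {pi / real k <..< pi / (real k - 1)}" "Phi k e = 0" for e
    using PF[of e] nz[of e] that by auto
  show ?thesis
  proof (rule ex1I[of _ x])
    show "x \<in> {pi / real k <..< pi / (real k - 1)} \<and> Phi k x = 0" using x xl xr by auto
  next
    fix y assume y: "y \<in> {pi / real k <..< pi / (real k - 1)} \<and> Phi k y = 0"
    have xin: "x \<in> {pi / real k <..< pi / (real k - 1)}" using x xl xr by auto
    have fx: "FF k x = 0" using FF0 xin x(3) by blast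
    have fy: "FF k y = 0" using FF0 y by blast
    show "y = x"
    proof (rule ccontr)
      assume "y \<noteq> x"
      hence "y < x \<or> x < y" by linarith
      thus False
      proof
        assume "y < x" thus False using key[OF k, of y x] xin y fx fy by auto
      next
        assume "x < y" thus False using key[OF k, of x y] xin y fx fy by auto
      qed
    qed
  qed
qed

lemma eq4:
  shows "\<exists>!\<eta>. \<eta> \<in> {pi / real (4::nat) <..< pi / (real (4::nat) - 1)} \<and> Phi 4 \<eta> = 0"
proof -
  have I: "{pi / real (4::nat) <..< pi / (real (4::nat) - 1)} = {pi/4 <..< pi/3}" by simp
  have char: "Phi 4 e = 0 \<longleftrightarrow> 16 * cos e ^ 4 = 2" and cpos: "cos e > 0"
    if "pi/4 < e" "e < pi/3" for e
  proof -
    have "cos (pi/3) < cos e" using that pi_gt_zero by (intro cos_monotone_0_pi) auto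
    hence c: "1/2 < cos e" by (simp add: cos_60)
    show "cos e > 0" using c by simp
    have s: "sin e > 0" using that pi_gt_zero by (intro sin_gt_zero) auto
    have "1/2 * (1/2) < cos e * cos e" using c by (intro mult_strict_mono) auto
    hence q: "4 * cos e ^ 2 - 1 > 0" by (simp add: power2_eq_square)
    have "cos e ^ 4 > 0" using c by simp
    thus "Phi 4 e = 0 \<longleftrightarrow> 16 * cos e ^ 4 = 2"
      using phi4[of e] c s q by auto
  qed
  have ex: "\<exists>x. pi/4 \<le> x \<and> x \<le> pi/3 \<and> 16 * cos x ^ 4 - 2 = 0"
  proof (rule IVT2)
    show "16 * cos (pi/3) ^ 4 - 2 \<le> (0::real)" by (simp add: cos_60 eval_nat_numeral)
    have "cos (pi/4) ^ 4 = (sqrt 2 / 2) ^ 4" by (simp add: cos_45)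
    also have "\<dots> = 1/4" by (simp add: power_divide power4_eq_xxxx)
    finally show "0 \<le> 16 * cos (pi/4) ^ 4 - (2::real)" by simp
    show "pi/4 \<le> pi/3" by simp
    show "\<forall>x. pi/4 \<le> x \<and> x \<le> pi/3 \<longrightarrow> isCont (\<lambda>x. 16 * cos x ^ 4 - 2) x"
      by (intro allI impI continuous_intros)
  qed
  then obtain x where x: "pi/4 \<le> x" "x \<le> pi/3" "16 * cos x ^ 4 = 2" by auto
  have xl: "x \<noteq> pi/4"
  proof
    assume "x = pi/4"
    hence "cos x ^ 4 = (sqrt 2 / 2) ^ 4" by (simp only: cos_45)
    also have "\<dots> = 1/4" by (simp add: power_divide power4_eq_xxxx)
    finally show False using x by simp
  qed
  have xr: "x \<noteq> pi/3"
  proof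
    assume "x = pi/3"
    hence c: "cos x = 1/2" by (simp only: cos_60)
    have "16 * (1/2::real) ^ 4 = 2" using x(3) unfolding c .
    thus False by (simp add: eval_nat_numeral)
  qed
  have xin: "pi/4 < x" "x < pi/3" using x xl xr by auto
  show ?thesis unfolding I
  proof (rule ex1I[of _ x])
    show "x \<in> {pi/4 <..< pi/3} \<and> Phi 4 x = 0" using xin char[OF xin] x by auto
  next
    fix y assume y: "y \<in> {pi/4 <..< pi/3} \<and> Phi 4 y = 0"
    hence y1: "pi/4 < y" "y < pi/3" by auto
    have "16 * cos y ^ 4 = 2" using char[OF y1] y by auto
    hence "cos y ^ 4 = cos x ^ 4" using x by simp
    hence e4: "cos y ^ 4 = cos x ^ 4" .
    have "cos y = cos x"
      by (rule power_eq_imp_eq_base[OF e4]) (use cpos[OF y1] cpos[OF xin] in auto)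
    thus "y = x" by (rule cos_inj_pi[rotated 4]) (use y1 xin pi_gt_zero in auto)
  qed
qed

theorem lemma4p2:
  fixes k :: nat
  assumes "k \<ge> 4"
  shows "\<exists>!\<eta>. \<eta> \<in> {pi / real k <..< pi / (real k - 1)} \<and> Phi k \<eta> = 0"
proof (cases "k = 4")
  case True thus ?thesis using eq4 by simp
next
  case False thus ?thesis using assms ge5 by simp
qed

end
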